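(* Let $A_0$, $\theta$ and $\gamma$ be as follows: - $A_0$ is feasible for (GDSP) with $\mathrm{assoc}_S(A_0)>0$; - $\theta$ is the minimum of $\mathrm{pen}(A)$ over nonempty infeasible $A\subseteq V'$; - $\gamma>\dfrac{\mathrm{vol}_d(V)}{\theta}\cdot\dfrac{\mathrm{vol}_g(A_0)+\nu_S}{\mathrm{assoc}_S(A_0)}$. Then the continuous problem $$\min_{f\in\mathbb{R}^m_+\setminus\{0\}}\frac{\mathrm{vol}_g^L(f)+\nu_S\,\mathrm{unit}^L(f)+\gamma\,\mathrm{pen}^L(f)}{\mathrm{assoc}_S^L(f)}$$ (with $x/0=+\infty$ for $x>0$) attains its minimum, and this minimum equals the reciprocal of the optimal value of (GDSP). Moreover, for any minimizer $f^*$, the set among $\{j\in V':f^*_j\ge f^*_i\}$, $i=1,\dots,m$, minimizing $$\frac{\mathrm{vol}_g(A)+\nu_S\,\mathrm{unit}(A)+\gamma\,\mathrm{pen}(A)}{\mathrm{assoc}_S(A)}$$ is an optimal solution of (GDSP).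
   Context: Let $V$ be a finite vertex set with symmetric nonnegative weights $w_{ij}=w_{ji}\ge0$ and $w_{ii}=0$. - $d_i=\sum_{j\in V}w_{ij}$, and $\mathrm{vol}_h(A)=\sum_{i\in A}h_i$. - $\mathrm{assoc}(A)=\sum_{i,j\in A}w_{ij}$ (ordered pairs), and $\mathrm{cut}(A,B)=\sum_{i\in A,j\in B}w_{ij}$. - Fix $S\subseteq V$, $V'=V\setminus S$, $m=|V'|$ (identify $V'$ with $\{1,\dots,m\}$), and $d^S_i=\sum_{j\in S}w_{ij}$. - $g:V\to(0,\infty)$, $\mu_S=\mathrm{assoc}(S)$, $\nu_S=\mathrm{vol}_g(S)$. - $\mathrm{unit}(A)=1$ if $A\ne\emptyset$ and $0$ otherwise. - $\mathrm{assoc}_S(A)=\mathrm{vol}_d(A)-\mathrm{cut}(A,V'\setminus A)+\mathrm{vol}_{d^S}(A)+\mu_S\,\mathrm{unit}(A)$ for $A\subseteq V'$. Constraint data: $M_1,\dots,M_p\in[0,\infty)^V$; reals $k_j,l_j$; a symmetric $\mathrm{dist}\ge0$ with $\mathrm{dist}(u,u)=0$; and $d_0\ge0$. - $A\subseteq V'$ is feasible for (GDSP) if $A\ne\emptyset$, $k_j\le\mathrm{vol}_{M_j}(A)\le l_j$ for all $j$, and $\mathrm{dist}(u,v)\le d_0$ for all $u,v\in A$. - (GDSP) maximizes $\mathrm{assoc}_S(A)/(\mathrm{vol}_g(A)+\nu_S)$ over feasible $A$. Penalty: $\mathrm{pen}(\emptyset)=0$, and for $A\ne\emptyset$, $$\mathrm{pen}(A)=\sum_{j}\max\{0,\mathrm{vol}_{M_j}(A)-l_j\}+\sum_j\max\{0,k_j-\mathrm{vol}_{M_j}(A)\}+\sum_{u,v\in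 A}\max\{0,\mathrm{dist}(u,v)-d_0\}.$$ Lovasz extension of $F:2^{V'}\to\mathbb{R}$ with $F(\emptyset)=0$: for $f\in\mathbb{R}^m$ and a permutation $\pi$ with $f_{\pi(1)}\le\dots\le f_{\pi(m)}$, $B_i=\{\pi(i),\dots,\pi(m)\}$, $$F^L(f)=\sum_{i=1}^{m-1}F(B_{i+1})(f_{\pi(i+1)}-f_{\pi(i)})+F(V')f_{\pi(1)}.$$ *)

theory Defs
  imports Complex_Main "HOL-Library.Extended_Real"
begin

definition vol :: "('v \<Rightarrow> real) \<Rightarrow> 'v set \<Rightarrow> real" where
  "vol h A = (\<Sum>i\<in>A. h i)"

text \<open>deg w X i = sum over j in X of w i j; d = deg w V and d^S = deg w S.\<close>
definition deg :: "('v \<Rightarrow> 'v \<Rightarrow> real) \<Rightarrow> 'v set \<Rightarrow> 'v \<Rightarrow> real" where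
  "deg w X i = (\<Sum>j\<in>X. w i j)"

definition assoc :: "('v \<Rightarrow> 'v \<Rightarrow> real) \<Rightarrow> 'v set \<Rightarrow> real" where
  "assoc w A = (\<Sum>i\<in>A. \<Sum>j\<in>A. w i j)"

definition cut :: "('v \<Rightarrow> 'v \<Rightarrow> real) \<Rightarrow> 'v set \<Rightarrow> 'v set \<Rightarrow> real" where
  "cut w A B = (\<Sum>i\<in>A. \<Sum>j\<in>B. w i j)"

definition unitf :: "'v set \<Rightarrow> real" where
  "unitf A = (if A = {} then 0 else 1)"

definition assocS :: "('v \<Rightarrow> 'v \<Rightarrow> real) \<Rightarrow> 'v set \<Rightarrow> 'v set \<Rightarrow> 'v set \<Rightarrow> real" where
  "assocS w V S A = vol (deg w V) A - cut w A ((V - S) - A) + vol (deg w S) A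
      + assoc w S * unitf A"

definition feasible :: "nat \<Rightarrow> (nat \<Rightarrow> 'v \<Rightarrow> real) \<Rightarrow> (nat \<Rightarrow> real) \<Rightarrow> (nat \<Rightarrow> real)
    \<Rightarrow> ('v \<Rightarrow> 'v \<Rightarrow> real) \<Rightarrow> real \<Rightarrow> 'v set \<Rightarrow> 'v set \<Rightarrow> bool" where
  "feasible p M k l D d0 V' A \<longleftrightarrow> A \<noteq> {} \<and> A \<subseteq> V'
     \<and> (\<forall>j<p. k j \<le> vol (M j) A \<and> vol (M j) A \<le> l j)
     \<and> (\<forall>u\<in>A. \<forall>v\<in>A. D u v \<le> d0)"

definition pen :: "nat \<Rightarrow> (nat \<Rightarrow> 'v \<Rightarrow> real) \<Rightarrow> (nat \<Rightarrow> real) \<Rightarrow> (nat \<Rightarrow> real)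
    \<Rightarrow> ('v \<Rightarrow> 'v \<Rightarrow> real) \<Rightarrow> real \<Rightarrow> 'v set \<Rightarrow> real" where
  "pen p M k l D d0 A = (if A = {} then 0 else
      (\<Sum>j<p. max 0 (vol (M j) A - l j)) + (\<Sum>j<p. max 0 (k j - vol (M j) A))
      + (\<Sum>u\<in>A. \<Sum>v\<in>A. max 0 (D u v - d0)))"

text \<open>Lovasz extension w.r.t. an ordering xs = [pi(1),...,pi(m)] of the ground set U.\<close>
definition lovasz_seq :: "('v set \<Rightarrow> real) \<Rightarrow> 'v set \<Rightarrow> ('v \<Rightarrow> real) \<Rightarrow> 'v list \<Rightarrow> real" where
  "lovasz_seq F U f xs =
     (\<Sum>i<length xs - 1. F (set (drop (i + 1) xs)) * (f (xs ! (i + 1)) - f (xs ! i)))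
     + F U * f (xs ! 0)"

definition lovasz :: "('v set \<Rightarrow> real) \<Rightarrow> 'v set \<Rightarrow> ('v \<Rightarrow> real) \<Rightarrow> real" where
  "lovasz F U f = lovasz_seq F U f
     (SOME xs. distinct xs \<and> set xs = U \<and> sorted (map f xs))"

definition ediv :: "real \<Rightarrow> real \<Rightarrow> ereal" where
  "ediv x y = (if y = 0 \<and> x > 0 then PInfty else ereal (x / y))"

definition gdsp_ratio :: "('v \<Rightarrow> 'v \<Rightarrow> real) \<Rightarrow> 'v set \<Rightarrow> 'v set \<Rightarrow> ('v \<Rightarrow> real) \<Rightarrow> 'v set \<Rightarrow> real" where
  "gdsp_ratio w V S g A = assocS w V S A / (vol g A + vol g S)"

end

theory Submission
  imports Defs
begin
lemma sorted_map_nth: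
  assumes "sorted (map f xs)" "i \<le> j" "j < length xs"
  shows "f (xs!i) \<le> f (xs!j)"
proof -
  have "map f xs ! i \<le> map f xs ! j" using assms sorted_nth_mono by (metis length_map)
  thus ?thesis using assms by simp
qed

lemma level_drop:
  assumes s: "sorted (map f xs)" and i: "Suc i < length xs"
    and lt: "f (xs!i) < f (xs!Suc i)"
  shows "set (drop (Suc i) xs) = {j \<in> set xs. f (xs!Suc i) \<le> f j}"
proof (intro equalityI subsetI)
  fix x assume "x \<in> set (drop (Suc i) xs)"
  then obtain k where k: "k < length xs - Suc i" "x = xs ! (Suc i + k)"
    by (auto simp: in_set_conv_nth)
  then have "f (xs!Suc i) \<le> f x" using sorted_map_nth[OF s, of "Suc i" "Suc i + k"] by simp
  moreover have "x \<in> set xs" using k by simp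
  ultimately show "x \<in> {j \<in> set xs. f (xs!Suc i) \<le> f j}" by simp
next
  fix x assume "x \<in> {j \<in> set xs. f (xs!Suc i) \<le> f j}"
  then have x: "x \<in> set xs" "f (xs!Suc i) \<le> f x" by auto
  then obtain k where k: "k < length xs" "x = xs!k" by (auto simp: in_set_conv_nth)
  have "Suc i \<le> k"
  proof (rule ccontr)
    assume "\<not> Suc i \<le> k"
    then have "k \<le> i" by simp
    then have "f (xs!k) \<le> f (xs!i)" using sorted_map_nth[OF s, of k i] i by simp
    then show False using x k lt by simp
  qed
  then have "x = drop (Suc i) xs ! (k - Suc i)" using k by simp
  moreover have "k - Suc i < length (drop (Suc i) xs)" using k \<open>Suc i \<le> k\<close> by simp
  ultimately show "x \<in> set (drop (Suc i) xs)" by (metis nth_mem)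
qed

lemma level_all:
  assumes s: "sorted (map f xs)" and ne: "xs \<noteq> []"
  shows "{j \<in> set xs. f (xs!0) \<le> f j} = set xs"
  using sorted_map_nth[OF s, of 0] ne by (auto simp: in_set_conv_nth)

lemma term_nonneg:
  fixes f :: "'v \<Rightarrow> real" and F G H :: "'v set \<Rightarrow> real"
  assumes s: "sorted (map f xs)" and U: "set xs = U" and i: "i < length xs - 1"
    and f0: "\<forall>i\<in>U. 0 \<le> f i"
    and F: "\<forall>i\<in>U. f i \<noteq> 0 \<longrightarrow> 0 \<le> F {j\<in>U. f i \<le> f j}"
  shows "0 \<le> F (set (drop (i+1) xs)) * (f (xs ! (i+1)) - f (xs ! i))"
proof (cases "f (xs!i) < f (xs!Suc i)")
  case True
  have i1: "Suc i < length xs" using i by simp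
  have mem: "xs!Suc i \<in> U" "xs!i \<in> U" using i1 U by auto
  have "f (xs!Suc i) \<noteq> 0" using True f0 mem by force
  then have "0 \<le> F {j\<in>U. f (xs!Suc i) \<le> f j}" using F mem by auto
  moreover have "set (drop (Suc i) xs) = {j\<in>U. f (xs!Suc i) \<le> f j}"
    using level_drop[OF s i1 True] U by simp
  ultimately show ?thesis using True by (auto intro!: mult_nonneg_nonneg)
next
  case False
  have "f (xs!i) \<le> f (xs!Suc i)" using sorted_map_nth[OF s, of i "Suc i"] i by simp
  then have "f (xs!i) = f (xs!Suc i)" using False by simp
  then show ?thesis by simp
qed

lemma term_pos:
  fixes f :: "'v \<Rightarrow> real" and F G H :: "'v set \<Rightarrow> real"
  assumes s: "sorted (map f xs)" and U: "set xs = U" and i: "i < length xs - 1"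
    and f0: "\<forall>i\<in>U. 0 \<le> f i" and lt: "f (xs!i) < f (xs!Suc i)"
    and F: "\<forall>i\<in>U. f i \<noteq> 0 \<longrightarrow> 0 < F {j\<in>U. f i \<le> f j}"
  shows "0 < F (set (drop (i+1) xs)) * (f (xs ! (i+1)) - f (xs ! i))"
proof -
  have i1: "Suc i < length xs" using i by simp
  have mem: "xs!Suc i \<in> U" "xs!i \<in> U" using i1 U by auto
  have "f (xs!Suc i) \<noteq> 0" using lt f0 mem by force
  then have "0 < F {j\<in>U. f (xs!Suc i) \<le> f j}" using F mem by auto
  moreover have "set (drop (Suc i) xs) = {j\<in>U. f (xs!Suc i) \<le> f j}"
    using level_drop[OF s i1 lt] U by simp
  ultimately show ?thesis using lt by (auto intro!: mult_pos_pos)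
qed

lemma last_nonneg:
  fixes f :: "'v \<Rightarrow> real" and F G H :: "'v set \<Rightarrow> real"
  assumes s: "sorted (map f xs)" and ne: "xs \<noteq> []" and U: "set xs = U"
    and f0: "\<forall>i\<in>U. 0 \<le> f i"
    and F: "\<forall>i\<in>U. f i \<noteq> 0 \<longrightarrow> 0 \<le> F {j\<in>U. f i \<le> f j}"
  shows "0 \<le> F U * f (xs!0)"
proof -
  have mem: "xs!0 \<in> U" using ne U by auto
  show ?thesis
  proof (cases "f (xs!0) = 0")
    case False
    then have "0 \<le> F {j\<in>U. f (xs!0) \<le> f j}" using F mem by auto
    then have "0 \<le> F U" using level_all[OF s ne] U by simp
    then show ?thesis using f0 mem by (auto intro!: mult_nonneg_nonneg)
  qed simp
qed

lemma lovasz_seq_nonneg: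
  fixes f :: "'v \<Rightarrow> real" and F G H :: "'v set \<Rightarrow> real"
  assumes s: "sorted (map f xs)" and ne: "xs \<noteq> []" and U: "set xs = U"
    and f0: "\<forall>i\<in>U. 0 \<le> f i"
    and F: "\<forall>i\<in>U. f i \<noteq> 0 \<longrightarrow> 0 \<le> F {j\<in>U. f i \<le> f j}"
  shows "0 \<le> lovasz_seq F U f xs"
  unfolding lovasz_seq_def
  using term_nonneg[OF s U _ f0 F] last_nonneg[OF s ne U f0 F]
  by (intro add_nonneg_nonneg sum_nonneg) auto

lemma lovasz_seq_pos:
  fixes f :: "'v \<Rightarrow> real" and F G H :: "'v set \<Rightarrow> real"
  assumes s: "sorted (map f xs)" and ne: "xs \<noteq> []" and U: "set xs = U"
    and f0: "\<forall>i\<in>U. 0 \<le> f i" and nz: "\<exists>i\<in>U. f i \<noteq> 0"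
    and F: "\<forall>i\<in>U. f i \<noteq> 0 \<longrightarrow> 0 < F {j\<in>U. f i \<le> f j}"
  shows "0 < lovasz_seq F U f xs"
proof -
  have F': "\<forall>i\<in>U. f i \<noteq> 0 \<longrightarrow> 0 \<le> F {j\<in>U. f i \<le> f j}" using F by (auto intro: less_imp_le)
  have S: "0 \<le> (\<Sum>i<length xs - 1. F (set (drop (i + 1) xs)) * (f (xs ! (i + 1)) - f (xs ! i)))"
    using term_nonneg[OF s U _ f0 F'] by (intro sum_nonneg) auto
  have L: "0 \<le> F U * f (xs!0)" using last_nonneg[OF s ne U f0 F'] .
  have mem: "xs!0 \<in> U" using ne U by auto
  show ?thesis
  proof (cases "f (xs!0) = 0")
    case False
    then have "0 < F {j\<in>U. f (xs!0) \<le> f j}" using F mem by auto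
    then have "0 < F U" using level_all[OF s ne] U by simp
    moreover have "0 < f (xs!0)" using f0 mem False by force
    ultimately have "0 < F U * f (xs!0)" by simp
    then show ?thesis unfolding lovasz_seq_def using S by simp
  next
    case True
    obtain k where k: "k < length xs" "f (xs!k) \<noteq> 0" using nz U by (auto simp: in_set_conv_nth)
    have "\<exists>i<length xs - 1. f (xs!i) < f (xs!Suc i)"
    proof (rule ccontr)
      assume "\<not> ?thesis"
      then have eq: "\<forall>i<length xs - 1. f (xs!Suc i) \<le> f (xs!i)" by auto
      have "f (xs!i) = 0" if "i < length xs" for i
        using that
      proof (induction i)
        case 0 show ?case using True .
      next
        case (Suc i)
        then have "f (xs!Suc i) \<le> f (xs!i)" using eq[rule_format, of i] Suc.prems by simp
        moreover have "f (xs!i) = 0" using Suc by auto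
        moreover have "0 \<le> f (xs!Suc i)" using f0 U Suc.prems by auto
        ultimately show ?case by simp
      qed
      then show False using k by auto
    qed
    then obtain i where i: "i < length xs - 1" "f (xs!i) < f (xs!Suc i)" by auto
    have "0 < (\<Sum>i<length xs - 1. F (set (drop (i + 1) xs)) * (f (xs ! (i + 1)) - f (xs ! i)))"
      apply (rule sum_pos2[of _ i])
      using i term_pos[OF s U i(1) f0 i(2) F] term_nonneg[OF s U _ f0 F'] by auto
    then show ?thesis unfolding lovasz_seq_def using L by simp
  qed
qed

lemma sum_lin3:
  fixes x y z c :: "nat \<Rightarrow> real"
  shows "(\<Sum>i\<in>I. (x i + a * y i + b * z i) * c i)
    = (\<Sum>i\<in>I. x i * c i) + a * (\<Sum>i\<in>I. y i * c i) + b * (\<Sum>i\<in>I. z i * c i)"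
  by (simp add: sum.distrib sum_distrib_left ring_distribs mult.assoc)

lemma sum_lin_diff:
  fixes x y c :: "nat \<Rightarrow> real"
  shows "(\<Sum>i\<in>I. (x i - a * y i) * c i)
    = (\<Sum>i\<in>I. x i * c i) - a * (\<Sum>i\<in>I. y i * c i)"
  by (simp add: sum_subtractf sum_distrib_left left_diff_distrib mult.assoc)

lemma lovasz_seq_lin:
  fixes f :: "'v \<Rightarrow> real" and F G H :: "'v set \<Rightarrow> real"
  shows "lovasz_seq (\<lambda>A. F A + a * G A + b * H A) U f xs
    = lovasz_seq F U f xs + a * lovasz_seq G U f xs + b * lovasz_seq H U f xs"
  unfolding lovasz_seq_def sum_lin3 by algebra

lemma lovasz_seq_diff:
  fixes f :: "'v \<Rightarrow> real" and F G H :: "'v set \<Rightarrow> real"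
  shows "lovasz_seq (\<lambda>A. F A - a * G A) U f xs = lovasz_seq F U f xs - a * lovasz_seq G U f xs"
  unfolding lovasz_seq_def sum_lin_diff by algebra

lemma lovasz_seq_const:
  fixes f :: "'v \<Rightarrow> real" and F G H :: "'v set \<Rightarrow> real"
  assumes "xs \<noteq> []"
  shows "lovasz_seq (\<lambda>_. c) U f xs = c * f (xs ! (length xs - 1))"
proof -
  have "(\<Sum>i<length xs - 1. c * (f (xs ! Suc i) - f (xs ! i)))
        = c * (\<Sum>i<length xs - 1. f (xs ! Suc i) - f (xs ! i))"
    by (simp add: sum_distrib_left)
  also have "\<dots> = c * (f (xs ! (length xs - 1)) - f (xs!0))"
    using sum_lessThan_telescope[of "\<lambda>i. f (xs!i)" "length xs - 1"] by simp
  finally show ?thesis unfolding lovasz_seq_def by (simp add: algebra_simps)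
qed

lemma lovasz_seq_cong:
  fixes f :: "'v \<Rightarrow> real" and F G H :: "'v set \<Rightarrow> real"
  assumes s: "sorted (map f xs)" and ne: "xs \<noteq> []" and U: "set xs = U"
    and f0: "\<forall>i\<in>U. 0 \<le> f i"
    and FG: "\<forall>i\<in>U. f i \<noteq> 0 \<longrightarrow> F {j\<in>U. f i \<le> f j} = G {j\<in>U. f i \<le> f j}"
  shows "lovasz_seq F U f xs = lovasz_seq G U f xs"
proof -
  have t: "F (set (drop (i+1) xs)) * (f (xs ! (i+1)) - f (xs ! i))
         = G (set (drop (i+1) xs)) * (f (xs ! (i+1)) - f (xs ! i))" if i: "i < length xs - 1" for i
  proof (cases "f (xs!i) < f (xs!Suc i)")
    case True
    have i1: "Suc i < length xs" using i by simp
    have mem: "xs!Suc i \<in> U" "xs!i \<in> U" using i1 U by auto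
    have "f (xs!Suc i) \<noteq> 0" using True f0 mem by force
    then have "F {j\<in>U. f (xs!Suc i) \<le> f j} = G {j\<in>U. f (xs!Suc i) \<le> f j}" using FG mem by auto
    moreover have "set (drop (Suc i) xs) = {j\<in>U. f (xs!Suc i) \<le> f j}"
      using level_drop[OF s i1 True] U by simp
    ultimately show ?thesis by simp
  next
    case False
    have "f (xs!i) \<le> f (xs!Suc i)" using sorted_map_nth[OF s, of i "Suc i"] i by simp
    then have "f (xs!i) = f (xs!Suc i)" using False by simp
    then show ?thesis by simp
  qed
  have l: "F U * f (xs!0) = G U * f (xs!0)"
  proof (cases "f (xs!0) = 0")
    case False
    have mem: "xs!0 \<in> U" using ne U by auto
    then have "F {j\<in>U. f (xs!0) \<le> f j} = G {j\<in>U. f (xs!0) \<le> f j}" using FG False by auto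
    then show ?thesis using level_all[OF s ne] U by simp
  qed simp
  have "(\<Sum>i<length xs - 1. F (set (drop (i+1) xs)) * (f (xs ! (i+1)) - f (xs ! i)))
     = (\<Sum>i<length xs - 1. G (set (drop (i+1) xs)) * (f (xs ! (i+1)) - f (xs ! i)))"
    by (rule sum.cong[OF refl]) (use t in auto)
  then show ?thesis unfolding lovasz_seq_def using l by simp
qed

lemma ediv_ge:
  assumes "0 < x" "0 \<le> y" "q * y \<le> x" "0 < q"
  shows "ereal q \<le> ediv x y"
proof (cases "y = 0")
  case False
  then have "0 < y" using assms by simp
  then have "q \<le> x / y" using assms by (simp add: pos_le_divide_eq)
  then show ?thesis unfolding ediv_def using False by simp
qed (use assms in \<open>simp add: ediv_def\<close>)

lemma ediv_gt:
  assumes "0 < x" "0 \<le> y" "q * y < x"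
  shows "ereal q < ediv x y"
proof (cases "y = 0")
  case False
  then have "0 < y" using assms by simp
  then have "q < x / y" using assms by (simp add: pos_less_divide_eq)
  then show ?thesis unfolding ediv_def using False by simp
qed (use assms in \<open>simp add: ediv_def\<close>)

lemma ediv_gt_rev:
  assumes "0 < x" "0 \<le> y" "ereal q < ediv x y"
  shows "q * y < x"
proof (cases "y = 0")
  case False
  then have "0 < y" using assms by simp
  then have "q < x / y" using assms False by (simp add: ediv_def)
  then show ?thesis using \<open>0 < y\<close> by (simp add: pos_less_divide_eq)
qed (use assms in simp)

lemma assocS_formula:
  fixes w :: "'v \<Rightarrow> 'v \<Rightarrow> real"
  assumes finV: "finite V" and SV: "S \<subseteq> V" and A: "A \<subseteq> V - S" and ne: "A \<noteq> {}"
  shows "assocS w V S A = (\<Sum>i\<in>A. \<Sum>j\<in>A. w i j) + 2 * (\<Sum>i\<in>A. \<Sum>j\<in>S. w i j)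
           + (\<Sum>i\<in>S. \<Sum>j\<in>S. w i j)"
proof -
  have fA: "finite A" and fS: "finite S" and fR: "finite ((V - S) - A)"
    using finV SV A by (auto intro: finite_subset)
  have Veq: "V = (A \<union> ((V - S) - A)) \<union> S" using A SV by auto
  have split: "(\<Sum>j\<in>V. w i j) = (\<Sum>j\<in>A. w i j) + (\<Sum>j\<in>(V-S)-A. w i j) + (\<Sum>j\<in>S. w i j)" for i
  proof -
    have "(\<Sum>j\<in>V. w i j) = (\<Sum>j\<in>A \<union> ((V - S) - A). w i j) + (\<Sum>j\<in>S. w i j)"
      by (subst Veq, rule sum.union_disjoint) (use fA fS fR A in auto)
    also have "(\<Sum>j\<in>A \<union> ((V - S) - A). w i j) = (\<Sum>j\<in>A. w i j) + (\<Sum>j\<in>(V-S)-A. w i j)"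
      by (rule sum.union_disjoint) (use fA fR in auto)
    finally show ?thesis .
  qed
  show ?thesis
    unfolding assocS_def vol_def deg_def cut_def assoc_def unitf_def
    using ne by (simp add: split sum.distrib)
qed

lemma assocS_bounds:
  fixes w :: "'v \<Rightarrow> 'v \<Rightarrow> real"
  assumes finV: "finite V" and SV: "S \<subseteq> V" and A: "A \<subseteq> V - S" and ne: "A \<noteq> {}"
    and w_sym: "\<forall>i\<in>V. \<forall>j\<in>V. w i j = w j i" and w_nn: "\<forall>i\<in>V. \<forall>j\<in>V. w i j \<ge> 0"
  shows "0 \<le> assocS w V S A" "assocS w V S A \<le> vol (deg w V) V"
proof -
  have fA: "finite A" and fS: "finite S"
    using finV SV A by (auto intro: finite_subset)
  have nn: "0 \<le> w i j" if "i \<in> A \<union> S" "j \<in> A \<union> S" for i j using that w_nn A SV by auto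
  have e: "assocS w V S A = (\<Sum>i\<in>A. \<Sum>j\<in>A. w i j) + 2 * (\<Sum>i\<in>A. \<Sum>j\<in>S. w i j)
           + (\<Sum>i\<in>S. \<Sum>j\<in>S. w i j)" by (rule assocS_formula[OF finV SV A ne])
  show "0 \<le> assocS w V S A" unfolding e
    by (intro add_nonneg_nonneg mult_nonneg_nonneg sum_nonneg) (auto intro: nn)
  have dis: "A \<inter> S = {}" using A by auto
  have sw: "(\<Sum>i\<in>S. \<Sum>j\<in>A. w i j) = (\<Sum>i\<in>A. \<Sum>j\<in>S. w i j)"
  proof -
    have "(\<Sum>i\<in>S. \<Sum>j\<in>A. w i j) = (\<Sum>j\<in>A. \<Sum>i\<in>S. w i j)" by (rule sum.swap)
    also have "\<dots> = (\<Sum>i\<in>A. \<Sum>j\<in>S. w i j)"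
      by (intro sum.cong refl) (use w_sym A SV in auto)
    finally show ?thesis .
  qed
  have "(\<Sum>i\<in>A \<union> S. \<Sum>j\<in>A \<union> S. w i j)
      = (\<Sum>i\<in>A \<union> S. (\<Sum>j\<in>A. w i j) + (\<Sum>j\<in>S. w i j))"
    by (intro sum.cong refl sum.union_disjoint fA fS dis)
  also have "\<dots> = (\<Sum>i\<in>A. (\<Sum>j\<in>A. w i j) + (\<Sum>j\<in>S. w i j)) + (\<Sum>i\<in>S. (\<Sum>j\<in>A. w i j) + (\<Sum>j\<in>S. w i j))"
    by (rule sum.union_disjoint[OF fA fS dis])
  also have "\<dots> = assocS w V S A" unfolding e sum.distrib sw by simp
  finally have eq: "(\<Sum>i\<in>A \<union> S. \<Sum>j\<in>A \<union> S. w i j) = assocS w V S A" .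
  have sub: "A \<union> S \<subseteq> V" using A SV by auto
  have "(\<Sum>i\<in>A \<union> S. \<Sum>j\<in>A \<union> S. w i j) \<le> (\<Sum>i\<in>A \<union> S. \<Sum>j\<in>V. w i j)"
    by (intro sum_mono sum_mono2 finV sub) (use w_nn sub in auto)
  also have "\<dots> \<le> (\<Sum>i\<in>V. \<Sum>j\<in>V. w i j)"
    by (intro sum_mono2 finV sub sum_nonneg) (use w_nn in auto)
  finally show "assocS w V S A \<le> vol (deg w V) V" using eq unfolding vol_def deg_def by simp
qed

theorem mainTheorem4:
  fixes V S A0 :: "'v set" and w :: "'v \<Rightarrow> 'v \<Rightarrow> real" and g :: "'v \<Rightarrow> real"
    and p :: nat and M :: "nat \<Rightarrow> 'v \<Rightarrow> real" and k l :: "nat \<Rightarrow> real"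
    and D :: "'v \<Rightarrow> 'v \<Rightarrow> real" and d0 \<theta> \<gamma> :: real
  assumes finV: "finite V" and SV: "S \<subseteq> V"
    and w_sym: "\<forall>i\<in>V. \<forall>j\<in>V. w i j = w j i" and w_nn: "\<forall>i\<in>V. \<forall>j\<in>V. w i j \<ge> 0"
    and w_diag: "\<forall>i\<in>V. w i i = 0"
    and g_pos: "\<forall>i\<in>V. g i > 0"
    and M_nn: "\<forall>j<p. \<forall>i\<in>V. M j i \<ge> 0"
    and D_sym: "\<forall>u\<in>V. \<forall>v\<in>V. D u v = D v u" and D_nn: "\<forall>u\<in>V. \<forall>v\<in>V. D u v \<ge> 0"
    and D_diag: "\<forall>u\<in>V. D u u = 0" and d0_nn: "d0 \<ge> 0"
    and A0_feas: "feasible p M k l D d0 (V - S) A0"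
    and A0_pos: "assocS w V S A0 > 0"
    and theta_def: "\<theta> = Min {pen p M k l D d0 A | A. A \<subseteq> V - S \<and> A \<noteq> {}
                                  \<and> \<not> feasible p M k l D d0 (V - S) A}"
    and gamma_gt: "\<gamma> > vol (deg w V) V / \<theta> * ((vol g A0 + vol g S) / assocS w V S A0)"
  shows "let V' = V - S; \<nu> = vol g S;
             opt = Max (gdsp_ratio w V S g ` {A. feasible p M k l D d0 V' A});
             adm = {f :: 'v \<Rightarrow> real. (\<forall>i\<in>V'. f i \<ge> 0) \<and> (\<exists>i\<in>V'. f i \<noteq> 0)};
             R = (\<lambda>f. ediv (lovasz (vol g) V' f + \<nu> * lovasz unitf V' f
                              + \<gamma> * lovasz (pen p M k l D d0) V' f)
                           (lovasz (assocS w V S) V' f));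
             Q = (\<lambda>A. ediv (vol g A + \<nu> * unitf A + \<gamma> * pen p M k l D d0 A) (assocS w V S A))
         in (\<exists>f\<in>adm. (\<forall>h\<in>adm. R f \<le> R h) \<and> R f = ereal (1 / opt))
            \<and> (\<forall>f\<in>adm. (\<forall>h\<in>adm. R f \<le> R h) \<longrightarrow>
                 (\<forall>A\<in>{{j\<in>V'. f j \<ge> f i} | i. i \<in> V'}.
                    (\<forall>B\<in>{{j\<in>V'. f j \<ge> f i} | i. i \<in> V'}. Q A \<le> Q B) \<longrightarrow>
                    feasible p M k l D d0 V' A \<and> gdsp_ratio w V S g A = opt))"
proof -
  define V' where "V' = V - S"
  define \<nu> where "\<nu> = vol g S"
  define FE where "FE = {A. feasible p M k l D d0 V' A}"
  define opt where "opt = Max (gdsp_ratio w V S g ` FE)"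
  define adm where "adm = {f :: 'v \<Rightarrow> real. (\<forall>i\<in>V'. f i \<ge> 0) \<and> (\<exists>i\<in>V'. f i \<noteq> 0)}"
  define R where "R = (\<lambda>f. ediv (lovasz (vol g) V' f + \<nu> * lovasz unitf V' f
                              + \<gamma> * lovasz (pen p M k l D d0) V' f)
                           (lovasz (assocS w V S) V' f))"
  define Q where "Q = (\<lambda>A. ediv (vol g A + \<nu> * unitf A + \<gamma> * pen p M k l D d0 A) (assocS w V S A))"
  define N where "N = (\<lambda>A. vol g A + \<nu> * unitf A + \<gamma> * pen p M k l D d0 A)"
  define Dn where "Dn = assocS w V S"
  define q where "q = 1 / opt"
  define H where "H = (\<lambda>A. N A - q * Dn A)"
  have finV': "finite V'" using finV V'_def by simp
  have A0: "A0 \<in> FE" "A0 \<noteq> {}" "A0 \<subseteq> V'"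
    using A0_feas unfolding FE_def V'_def feasible_def by auto
  have finFE: "finite FE"
    by (rule finite_subset[of _ "Pow V'"]) (auto simp: FE_def feasible_def finV')
  have opt_ge: "gdsp_ratio w V S g A \<le> opt" if "A \<in> FE" for A
    unfolding opt_def using finFE that by simp
  obtain Ast where Ast: "Ast \<in> FE" "gdsp_ratio w V S g Ast = opt"
  proof -
    have "opt \<in> gdsp_ratio w V S g ` FE" unfolding opt_def
      using finFE A0(1) by (intro Max_in) auto
    then show ?thesis using that by auto
  qed
  have volpos: "0 < vol g A" if "A \<noteq> {}" "A \<subseteq> V'" for A
    unfolding vol_def using that g_pos finV'
    by (intro sum_pos) (auto simp: V'_def intro: finite_subset)
  have nu_nn: "0 \<le> \<nu>" unfolding \<nu>_def vol_def
    using g_pos SV by (intro sum_nonneg) (auto intro: less_imp_le)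
  have Dn_nn: "0 \<le> Dn A" and Dn_le: "Dn A \<le> vol (deg w V) V" if "A \<noteq> {}" "A \<subseteq> V'" for A
    using assocS_bounds[OF finV SV _ _ w_sym w_nn, of A] that unfolding Dn_def V'_def by auto
  have X_nn: "0 \<le> vol (deg w V) V" unfolding vol_def deg_def
    using w_nn by (intro sum_nonneg) auto
  have ratioA0: "0 < gdsp_ratio w V S g A0"
    unfolding gdsp_ratio_def using A0_pos volpos[OF A0(2,3)] nu_nn unfolding \<nu>_def by simp
  have opt_pos: "0 < opt" using opt_ge[OF A0(1)] ratioA0 by simp
  have q_pos: "0 < q" unfolding q_def using opt_pos by simp
  have pen_nn: "0 \<le> pen p M k l D d0 A" for A
    unfolding pen_def by (auto intro!: add_nonneg_nonneg sum_nonneg)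
  have pen_feas: "pen p M k l D d0 A = 0" if "feasible p M k l D d0 V' A" for A
  proof -
    have F: "A \<noteq> {}" "\<forall>j<p. k j \<le> vol (M j) A \<and> vol (M j) A \<le> l j" "\<forall>u\<in>A. \<forall>v\<in>A. D u v \<le> d0"
      using that unfolding feasible_def by auto
    have 1: "(\<Sum>j<p. max 0 (vol (M j) A - l j)) = 0" by (rule sum.neutral) (use F in auto)
    have 2: "(\<Sum>j<p. max 0 (k j - vol (M j) A)) = 0" by (rule sum.neutral) (use F in auto)
    have 3: "(\<Sum>u\<in>A. \<Sum>v\<in>A. max 0 (D u v - d0)) = 0"
      by (intro sum.neutral ballI) (use F in auto)
    show ?thesis unfolding pen_def using 1 2 3 by simp
  qed
  have pen_infeas: "0 < pen p M k l D d0 A"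
    if "A \<noteq> {}" "A \<subseteq> V'" "\<not> feasible p M k l D d0 V' A" for A
  proof -
    have fA: "finite A" using that finV' by (auto intro: finite_subset)
    define s1 where "s1 = (\<Sum>j<p. max 0 (vol (M j) A - l j))"
    define s2 where "s2 = (\<Sum>j<p. max 0 (k j - vol (M j) A))"
    define s3 where "s3 = (\<Sum>u\<in>A. \<Sum>v\<in>A. max 0 (D u v - d0))"
    have e: "pen p M k l D d0 A = s1 + s2 + s3" unfolding pen_def s1_def s2_def s3_def using that by simp
    have n1: "0 \<le> s1" "0 \<le> s2" "0 \<le> s3" unfolding s1_def s2_def s3_def
      by (auto intro!: sum_nonneg)
    have "(\<exists>j<p. k j > vol (M j) A) \<or> (\<exists>j<p. vol (M j) A > l j) \<or> (\<exists>u\<in>A. \<exists>v\<in>A. D u v > d0)"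
      using that unfolding feasible_def by (auto simp: not_le)
    moreover have "0 < s2" if "j < p" "k j > vol (M j) A" for j
      unfolding s2_def by (rule sum_pos2[of _ j]) (use that in auto)
    moreover have "0 < s1" if "j < p" "vol (M j) A > l j" for j
      unfolding s1_def by (rule sum_pos2[of _ j]) (use that in auto)
    moreover have "0 < s3" if "u \<in> A" "v \<in> A" "D u v > d0" for u v
      unfolding s3_def
    proof (rule sum_pos2[of _ u])
      show "0 < (\<Sum>v\<in>A. max 0 (D u v - d0))"
        by (rule sum_pos2[of _ v]) (use that fA in auto)
    qed (use that fA in \<open>auto intro!: sum_nonneg\<close>)
    ultimately have "0 < s1 \<or> 0 < s2 \<or> 0 < s3" by blast
    then show ?thesis using e n1 by (elim disjE) linarith+
  qed
  have infeas_bound: "q * Dn A < N A"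
    if A: "A \<noteq> {}" "A \<subseteq> V'" "\<not> feasible p M k l D d0 V' A" for A
  proof -
    define TS where "TS = {pen p M k l D d0 A | A. A \<subseteq> V - S \<and> A \<noteq> {}
                                  \<and> \<not> feasible p M k l D d0 (V - S) A}"
    have th: "\<theta> = Min TS" using theta_def TS_def by simp
    have "TS \<subseteq> pen p M k l D d0 ` Pow V'" unfolding TS_def V'_def by auto
    then have finTS: "finite TS" using finV' by (meson finite_Pow_iff finite_imageI finite_subset)
    have inTS: "pen p M k l D d0 A \<in> TS" unfolding TS_def using A V'_def by auto
    have th_le: "\<theta> \<le> pen p M k l D d0 A" using th finTS inTS by simp
    have "\<theta> \<in> TS" using th finTS inTS by (metis Min_in empty_iff)
    then have th_pos: "0 < \<theta>" unfolding TS_def using pen_infeas V'_def by auto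
    define X where "X = vol (deg w V) V"
    define r where "r = (vol g A0 + vol g S) / assocS w V S A0"
    have r_eq: "r = 1 / gdsp_ratio w V S g A0" unfolding r_def gdsp_ratio_def by simp
    have qr: "q \<le> r" unfolding r_eq q_def
      by (rule divide_left_mono) (use opt_ge[OF A0(1)] ratioA0 in auto)
    have r_pos: "0 < r" using r_eq ratioA0 by simp
    have g1: "\<gamma> > X / \<theta> * r" using gamma_gt unfolding X_def r_def .
    have g2: "X * r < \<gamma> * \<theta>"
    proof -
      have "X * r = (X / \<theta> * r) * \<theta>" using th_pos by simp
      also have "\<dots> < \<gamma> * \<theta>" using g1 th_pos by (intro mult_strict_right_mono)
      finally show ?thesis .
    qed
    have "0 \<le> X / \<theta> * r" using X_nn r_pos th_pos unfolding X_def by simp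
    then have gam_pos: "0 < \<gamma>" using g1 by linarith
    have "q * Dn A \<le> q * X" using Dn_le[OF A(1,2)] q_pos unfolding X_def by simp
    also have "\<dots> \<le> r * X" using qr X_nn unfolding X_def by (intro mult_right_mono)
    also have "\<dots> < \<gamma> * \<theta>" using g2 by (simp add: mult.commute)
    also have "\<dots> \<le> \<gamma> * pen p M k l D d0 A" using th_le gam_pos by simp
    also have "\<dots> < N A" unfolding N_def unitf_def using volpos[OF A(1,2)] nu_nn A by simp
    finally show ?thesis .
  qed
  have feas_bound: "q * Dn A \<le> N A \<and> (gdsp_ratio w V S g A \<noteq> opt \<longrightarrow> q * Dn A < N A)"
    if A: "feasible p M k l D d0 V' A" for A
  proof -
    have ne: "A \<noteq> {}" "A \<subseteq> V'" using A unfolding feasible_def by auto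
    have NA: "N A = vol g A + \<nu>" unfolding N_def unitf_def using pen_feas[OF A] ne by simp
    have den: "0 < vol g A + \<nu>" using volpos[OF ne] nu_nn by simp
    have le: "Dn A / (vol g A + \<nu>) \<le> opt" using opt_ge[of A] A
      unfolding FE_def gdsp_ratio_def Dn_def \<nu>_def by simp
    have "q * Dn A = Dn A / opt" unfolding q_def by simp
    moreover have "Dn A / opt \<le> vol g A + \<nu>" using le den opt_pos
      by (simp add: pos_divide_le_eq mult.commute)
    moreover have "Dn A / opt < vol g A + \<nu>" if "gdsp_ratio w V S g A \<noteq> opt"
    proof -
      have "Dn A / (vol g A + \<nu>) < opt" using le that
        unfolding gdsp_ratio_def Dn_def \<nu>_def by simp
      then show ?thesis using den opt_pos by (simp add: pos_divide_less_eq mult.commute)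
    qed
    ultimately show ?thesis using NA by simp
  qed
  have Npos: "0 < N A" if "A \<noteq> {}" "A \<subseteq> V'" for A
  proof (cases "feasible p M k l D d0 V' A")
    case True
    then show ?thesis unfolding N_def unitf_def using pen_feas[OF True] volpos[OF that] nu_nn that by simp
  next
    case False
    have "0 \<le> q * Dn A" using Dn_nn[OF that] q_pos by simp
    then show ?thesis using infeas_bound[OF that False] by linarith
  qed
  have Hge: "0 \<le> H A" if "A \<noteq> {}" "A \<subseteq> V'" for A
  proof (cases "feasible p M k l D d0 V' A")
    case True
    then show ?thesis unfolding H_def using feas_bound[OF True] by simp
  next
    case False
    then show ?thesis unfolding H_def using infeas_bound[OF that False] by simp
  qed
  have Hgt: "0 < H A"
    if "A \<noteq> {}" "A \<subseteq> V'" "\<not> (feasible p M k l D d0 V' A \<and> gdsp_ratio w V S g A = opt)" for A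
  proof (cases "feasible p M k l D d0 V' A")
    case True
    then have "gdsp_ratio w V S g A \<noteq> opt" using that(3) by simp
    then show ?thesis unfolding H_def using feas_bound[OF True] by simp
  next
    case False
    then show ?thesis unfolding H_def using infeas_bound[OF that(1,2) False] by simp
  qed
  define xsf where "xsf = (\<lambda>f::'v\<Rightarrow>real. SOME xs. distinct xs \<and> set xs = V' \<and> sorted (map f xs))"
  have xsf: "distinct (xsf f) \<and> set (xsf f) = V' \<and> sorted (map f (xsf f))" for f
  proof -
    obtain ys where "set ys = V'" "distinct ys" using finite_distinct_list[OF finV'] by blast
    then have "\<exists>xs. distinct xs \<and> set xs = V' \<and> sorted (map f xs)"
      by (intro exI[of _ "sort_key f ys"]) simp
    then show ?thesis unfolding xsf_def by (rule someI_ex)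
  qed
  have V'ne: "V' \<noteq> {}" using A0 by auto
  have xsne: "xsf f \<noteq> []" for f using xsf[of f] V'ne by auto
  have Rf: "R f = ediv (lovasz_seq N V' f (xsf f)) (lovasz_seq Dn V' f (xsf f))" for f
    unfolding R_def lovasz_def N_def Dn_def xsf_def by (subst lovasz_seq_lin) (rule refl)
  have lev: "{j\<in>V'. f i \<le> f j} \<noteq> {}" "{j\<in>V'. f i \<le> f j} \<subseteq> V'" if "i \<in> V'" for f :: "'v \<Rightarrow> real" and i
  proof -
    have "i \<in> {j\<in>V'. f i \<le> f j}" using that by simp
    then show "{j\<in>V'. f i \<le> f j} \<noteq> {}" by blast
  qed auto
  have Hl: "lovasz_seq H V' f xs = lovasz_seq N V' f xs - q * lovasz_seq Dn V' f xs" for f xs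
    unfolding H_def by (rule lovasz_seq_diff)
  have bound: "ereal q \<le> R f" if f: "f \<in> adm" for f
  proof -
    have s: "sorted (map f (xsf f))" and U: "set (xsf f) = V'" using xsf by auto
    have f0: "\<forall>i\<in>V'. 0 \<le> f i" and nz: "\<exists>i\<in>V'. f i \<noteq> 0" using f adm_def by auto
    have a: "0 < lovasz_seq N V' f (xsf f)"
      by (rule lovasz_seq_pos[OF s xsne U f0 nz]) (use Npos lev in auto)
    have b: "0 \<le> lovasz_seq Dn V' f (xsf f)"
      by (rule lovasz_seq_nonneg[OF s xsne U f0]) (use Dn_nn lev in auto)
    have c: "0 \<le> lovasz_seq H V' f (xsf f)"
      by (rule lovasz_seq_nonneg[OF s xsne U f0]) (use Hge lev in auto)
    show ?thesis unfolding Rf using ediv_ge[OF a b _ q_pos] c Hl by simp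
  qed
  have strict: "ereal q < R f" if f: "f \<in> adm" and hp: "\<forall>i\<in>V'. 0 < H {j\<in>V'. f i \<le> f j}" for f
  proof -
    have s: "sorted (map f (xsf f))" and U: "set (xsf f) = V'" using xsf by auto
    have f0: "\<forall>i\<in>V'. 0 \<le> f i" and nz: "\<exists>i\<in>V'. f i \<noteq> 0" using f adm_def by auto
    have a: "0 < lovasz_seq N V' f (xsf f)"
      by (rule lovasz_seq_pos[OF s xsne U f0 nz]) (use Npos lev in auto)
    have b: "0 \<le> lovasz_seq Dn V' f (xsf f)"
      by (rule lovasz_seq_nonneg[OF s xsne U f0]) (use Dn_nn lev in auto)
    have c: "0 < lovasz_seq H V' f (xsf f)"
      by (rule lovasz_seq_pos[OF s xsne U f0 nz]) (use hp in auto)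
    show ?thesis unfolding Rf using ediv_gt[OF a b] c Hl by simp
  qed
  define fA where "fA = (\<lambda>j. if j \<in> Ast then 1 else 0 :: real)"
  have Astf: "feasible p M k l D d0 V' Ast" using Ast FE_def by simp
  have Astne: "Ast \<noteq> {}" "Ast \<subseteq> V'" using Astf unfolding feasible_def by auto
  have fA_adm: "fA \<in> adm" unfolding adm_def fA_def using Astne by auto
  have RfA: "R fA = ereal q"
  proof -
    let ?xs = "xsf fA"
    have s: "sorted (map fA ?xs)" and U: "set ?xs = V'" using xsf by auto
    have f0: "\<forall>i\<in>V'. 0 \<le> fA i" unfolding fA_def by simp
    have levA: "{j\<in>V'. fA i \<le> fA j} = Ast" if "i \<in> V'" "fA i \<noteq> 0" for i
      using that Astne unfolding fA_def by (auto split: if_splits)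
    have t: "fA (?xs ! (length ?xs - 1)) = 1"
    proof -
      obtain j where j: "j \<in> Ast" using Astne by auto
      then obtain k where k: "k < length ?xs" "?xs ! k = j" using U Astne
        by (metis in_mono in_set_conv_nth)
      have "fA (?xs!k) \<le> fA (?xs ! (length ?xs - 1))"
        using sorted_map_nth[OF s, of k "length ?xs - 1"] k by simp
      then show ?thesis using k j unfolding fA_def by (auto split: if_splits)
    qed
    have eN: "lovasz_seq N V' fA ?xs = N Ast"
      using lovasz_seq_cong[OF s xsne U f0, of N "\<lambda>_. N Ast"] levA
        lovasz_seq_const[OF xsne, of "N Ast" V' fA] t by simp
    have eD: "lovasz_seq Dn V' fA ?xs = Dn Ast"
      using lovasz_seq_cong[OF s xsne U f0, of Dn "\<lambda>_. Dn Ast"] levA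
        lovasz_seq_const[OF xsne, of "Dn Ast" V' fA] t by simp
    have NA: "N Ast = vol g Ast + \<nu>" unfolding N_def unitf_def using pen_feas[OF Astf] Astne by simp
    have den: "0 < vol g Ast + \<nu>" using volpos[OF Astne] nu_nn by simp
    have DA: "Dn Ast = opt * (vol g Ast + \<nu>)"
      using Ast(2) den unfolding gdsp_ratio_def Dn_def \<nu>_def by (simp add: field_simps)
    have "Dn Ast \<noteq> 0" using DA den opt_pos by simp
    then show ?thesis unfolding Rf eN eD ediv_def NA DA q_def using den by simp
  qed
  have part1: "\<exists>f\<in>adm. (\<forall>h\<in>adm. R f \<le> R h) \<and> R f = ereal (1 / opt)"
  proof (rule bexI[OF _ fA_adm], intro conjI ballI)
    fix h assume "h \<in> adm" then show "R fA \<le> R h" using bound RfA by simp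
  qed (use RfA q_def in simp)
  have part2: "\<forall>f\<in>adm. (\<forall>h\<in>adm. R f \<le> R h) \<longrightarrow>
                 (\<forall>A\<in>{{j\<in>V'. f j \<ge> f i} | i. i \<in> V'}.
                    (\<forall>B\<in>{{j\<in>V'. f j \<ge> f i} | i. i \<in> V'}. Q A \<le> Q B) \<longrightarrow>
                    feasible p M k l D d0 V' A \<and> gdsp_ratio w V S g A = opt)"
  proof (intro ballI impI)
    fix f A
    assume f: "f \<in> adm" and fmin: "\<forall>h\<in>adm. R f \<le> R h"
      and Al: "A \<in> {{j\<in>V'. f j \<ge> f i} | i. i \<in> V'}"
      and Amin: "\<forall>B\<in>{{j\<in>V'. f j \<ge> f i} | i. i \<in> V'}. Q A \<le> Q B"
    obtain i0 where i0: "i0 \<in> V'" "A = {j\<in>V'. f i0 \<le> f j}" using Al by auto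
    show "feasible p M k l D d0 V' A \<and> gdsp_ratio w V S g A = opt"
    proof (rule ccontr)
      assume bad: "\<not> ?thesis"
      have Ane: "A \<noteq> {}" "A \<subseteq> V'" using i0 by auto
      have "0 < H A" using Hgt[OF Ane bad] .
      then have QA: "ereal q < Q A" unfolding Q_def H_def
        using ediv_gt[OF Npos[OF Ane] Dn_nn[OF Ane]] unfolding N_def Dn_def by simp
      have "\<forall>i\<in>V'. 0 < H {j\<in>V'. f i \<le> f j}"
      proof
        fix i assume i: "i \<in> V'"
        let ?B = "{j\<in>V'. f i \<le> f j}"
        have "Q A \<le> Q ?B" using Amin i by auto
        then have "ereal q < Q ?B" using QA by simp
        then have "q * Dn ?B < N ?B"
          using ediv_gt_rev[OF Npos[OF lev[OF i]] Dn_nn[OF lev[OF i]]]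
          unfolding Q_def N_def Dn_def by simp
        then show "0 < H ?B" unfolding H_def by simp
      qed
      then have "ereal q < R f" using strict[OF f] by simp
      moreover have "R f \<le> ereal q" using fmin fA_adm RfA by auto
      ultimately show False by simp
    qed
  qed
  show ?thesis
    using part1 part2 unfolding Let_def R_def Q_def adm_def opt_def FE_def \<nu>_def V'_def
    by blast
qed

end
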